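(* Let $q$ be a prime power and $n\ge k\ge0$ integers. Let $V_1,\dots,V_k$ be subspaces of $\mathbb{F}_q^n$ such that $\dim\big(\bigcap_{i\in\Omega}V_i\big)\le k-|\Omega|$ for all nonempty $\Omega\subseteq[k]$. Then there exist subspaces $V_i'$ of $\mathbb{F}_q^n$ with $V_i\subseteq V_i'$, $i=1,\dots,k$, such that (1) $\dim\big(\bigcap_{i\in\Omega}V_i'\big)\le k-|\Omega|$ for all nonempty $\Omega\subseteq[k]$, and (2) $\dim V_i'=k-1$ for all $i\in[k]$. *)

theory Defs
  imports "HOL-Analysis.Analysis"
begin

end

theory Submission
  imports Defs
begin

definition ssum :: "('a::field^'n) set \<Rightarrow> ('a^'n) set \<Rightarrow> ('a^'n) set" where
  "ssum S T = {x + y |x y. x \<in> S \<and> y \<in> T}"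

lemma ssum_sub: "vec.subspace S \<Longrightarrow> vec.subspace T \<Longrightarrow> vec.subspace (ssum S T)"
  unfolding ssum_def by (rule vec.subspace_sums)

lemma ssum_left: "vec.subspace T \<Longrightarrow> S \<subseteq> ssum S T"
  unfolding ssum_def by (force dest: vec.subspace_0)

lemma ssum_right: "vec.subspace S \<Longrightarrow> T \<subseteq> ssum S T"
  unfolding ssum_def by (force dest: vec.subspace_0)

lemma ssum_le: "vec.subspace W \<Longrightarrow> S \<subseteq> W \<Longrightarrow> T \<subseteq> W \<Longrightarrow> ssum S T \<subseteq> W"
  unfolding ssum_def by (auto intro: vec.subspace_add)

lemma ssum_mono: "S \<subseteq> S' \<Longrightarrow> T \<subseteq> T' \<Longrightarrow> ssum S T \<subseteq> ssum S' T'"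
  unfolding ssum_def by blast

lemma grass: "vec.subspace S \<Longrightarrow> vec.subspace T \<Longrightarrow>
  int (vec.dim (ssum S T)) = int (vec.dim S) + int (vec.dim T) - int (vec.dim (S \<inter> T))"
  unfolding ssum_def using vec.dim_sums_Int[of S T] by linarith

lemma psub_dim: "vec.subspace S \<Longrightarrow> vec.subspace T \<Longrightarrow> S \<subseteq> T \<Longrightarrow> \<not> T \<subseteq> S \<Longrightarrow> vec.dim S < vec.dim T"
  by (metis vec.dim_psubset vec.span_eq_iff psubsetI)

lemma dim_ins: assumes "vec.subspace S" "vec.subspace T"
  shows "vec.dim (vec.span (insert v S) \<inter> T) \<le> vec.dim (S \<inter> T) + 1"
proof -
  let ?S = "vec.span (insert v S)"
  have s: "vec.subspace ?S" by simp
  have "vec.dim ?S \<le> vec.dim S + 1" by (simp add: vec.dim_insert)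
  moreover have "S \<subseteq> ?S" by (meson subset_insertI order_trans vec.span_superset)
  hence "vec.dim (ssum S T) \<le> vec.dim (ssum ?S T)" by (intro vec.dim_subset ssum_mono) auto
  moreover note grass[OF assms] grass[OF s assms(2)]
  ultimately show ?thesis by linarith
qed

lemma eq_ins: assumes "vec.subspace S" "vec.subspace T" "v \<notin> ssum S T"
  shows "vec.span (insert v S) \<inter> T = S \<inter> T"
proof
  show "S \<inter> T \<subseteq> vec.span (insert v S) \<inter> T"
    by (meson Int_mono order_refl subset_insertI order_trans vec.span_superset)
  show "vec.span (insert v S) \<inter> T \<subseteq> S \<inter> T"
  proof
    fix x assume x: "x \<in> vec.span (insert v S) \<inter> T"
    then obtain c where c: "x - c *s v \<in> S"
      using vec.span_breakdown_eq assms(1) by (metis IntD1 vec.span_eq_iff)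
    show "x \<in> S \<inter> T"
    proof (cases "c = 0")
      case True thus ?thesis using c x by simp
    next
      case False
      have "v = (- inverse c) *s (x - c *s v) + inverse c *s x"
        using False by (simp add: vec_eq_iff field_simps)
      moreover have "(- inverse c) *s (x - c *s v) \<in> S" using c assms(1) vec.subspace_scale by blast
      moreover have "inverse c *s x \<in> T" using x assms(2) vec.subspace_scale by blast
      ultimately have "v \<in> ssum S T" unfolding ssum_def by blast
      with assms(3) show ?thesis by blast
    qed
  qed
qed

lemma dimD: assumes "vec.subspace S" "vec.subspace A" "int (vec.dim A) \<le> K + 1" "int (vec.dim (S \<inter> A)) \<ge> K"
  shows "vec.dim (ssum S A) \<le> vec.dim S + 1"
  using grass[OF assms(1,2)] assms(3,4) by linarith

lemma pairC:
  fixes S A B :: "('a::field^'n) set" and k a b c d :: int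
  assumes sub: "vec.subspace S" "vec.subspace A" "vec.subspace B"
    and "a + b = c + d" and "int (vec.dim S) + 2 \<le> k"
    and "int (vec.dim A) \<le> k - a + 1" "int (vec.dim B) \<le> k - b + 1"
    and "int (vec.dim (S \<inter> A)) \<ge> k - a" "int (vec.dim (S \<inter> B)) \<ge> k - b"
    and nA: "\<not> A \<subseteq> S" and nB: "\<not> B \<subseteq> S"
    and "int (vec.dim (S \<inter> (A \<inter> B))) \<le> k - c"
    and "d = 1 \<or> int (vec.dim (ssum A B)) \<le> k - d + 1"
  shows "ssum S A = ssum S B"
proof -
  have sA: "vec.subspace (ssum S A)" "vec.subspace (ssum S B)" using sub ssum_sub by auto
  have AB: "vec.subspace (A \<inter> B)" using sub vec.subspace_inter by blast
  have lA: "vec.dim S < vec.dim (ssum S A)"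
    using psub_dim[OF sub(1) sA(1) ssum_left[OF sub(2)]] nA ssum_right[OF sub(1), of A] by blast
  have lB: "vec.dim S < vec.dim (ssum S B)"
    using psub_dim[OF sub(1) sA(2) ssum_left[OF sub(3)]] nB ssum_right[OF sub(1), of B] by blast
  have gA: "int (vec.dim (ssum S A)) = int (vec.dim S) + int (vec.dim A) - int (vec.dim (S \<inter> A))"
    by (rule grass[OF sub(1,2)])
  have gB: "int (vec.dim (ssum S B)) = int (vec.dim S) + int (vec.dim B) - int (vec.dim (S \<inter> B))"
    by (rule grass[OF sub(1,3)])
  have eA: "int (vec.dim A) = k - a + 1" "int (vec.dim (S \<inter> A)) = k - a" using gA lA assms by linarith+
  have eB: "int (vec.dim B) = k - b + 1" "int (vec.dim (S \<inter> B)) = k - b" using gB lB assms by linarith+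
  show ?thesis
  proof (cases "A \<inter> B \<subseteq> S")
    case False
    have sC: "vec.subspace (ssum S (A \<inter> B))" using sub AB ssum_sub by auto
    have lC: "vec.dim S < vec.dim (ssum S (A \<inter> B))"
      using psub_dim[OF sub(1) sC ssum_left[OF AB]] False ssum_right[OF sub(1), of "A \<inter> B"] by blast
    have "ssum S (A \<inter> B) = ssum S A"
      apply (rule vec.subspace_dim_equal[OF sC sA(1)])
       apply (rule ssum_mono; auto)
      using lC lA dimD[OF sub(1,2), of "k - a"] eA by linarith
    moreover have "ssum S (A \<inter> B) = ssum S B"
      apply (rule vec.subspace_dim_equal[OF sC sA(2)])
       apply (rule ssum_mono; auto)
      using lC lB dimD[OF sub(1,3), of "k - b"] eB by linarith
    ultimately show ?thesis by simp
  next
    case True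
    hence eq: "S \<inter> (A \<inter> B) = A \<inter> B" by blast
    show ?thesis
    proof (cases "d = 1")
      case True
      have s1: "vec.subspace (S \<inter> A)" "vec.subspace (S \<inter> B)" using sub vec.subspace_inter by blast+
      have "vec.dim (ssum (S \<inter> A) (S \<inter> B)) \<le> vec.dim S"
        by (rule vec.dim_subset, rule ssum_le) (use sub in auto)
      moreover have i: "(S \<inter> A) \<inter> (S \<inter> B) = S \<inter> (A \<inter> B)" by blast
      moreover note grass[OF s1, unfolded i]
      ultimately have False using assms eA eB True by linarith
      thus ?thesis ..
    next
      case False
      have "vec.dim (A \<inter> B) = vec.dim (S \<inter> (A \<inter> B))" using eq by simp
      hence False using grass[OF sub(2,3)] assms eA eB False by linarith
      thus ?thesis ..
    qed
  qed
qed


lemma main_aux: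
  fixes V :: "nat \<Rightarrow> ('a::field^'n) set" and k n m :: nat
  assumes card: "CARD('n) = n" and kn: "k \<le> n"
    and "(\<Sum>i\<in>{1..k}. k - 1 - vec.dim (V i)) = m"
    and "\<forall>i\<in>{1..k}. vec.subspace (V i)"
    and "\<forall>\<Omega>. \<Omega> \<subseteq> {1..k} \<longrightarrow> \<Omega> \<noteq> {} \<longrightarrow> vec.dim (\<Inter>i\<in>\<Omega>. V i) \<le> k - card \<Omega>"
  shows "\<exists>V' :: nat \<Rightarrow> ('a ^ 'n) set.
           (\<forall>i\<in>{1..k}. vec.subspace (V' i) \<and> V i \<subseteq> V' i \<and> vec.dim (V' i) = k - 1) \<and>
           (\<forall>\<Omega>. \<Omega> \<subseteq> {1..k} \<longrightarrow> \<Omega> \<noteq> {} \<longrightarrow>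
              vec.dim (\<Inter>i\<in>\<Omega>. V' i) \<le> k - card \<Omega>)"
  using assms(3-5)
proof (induction m arbitrary: V rule: less_induct)
  case (less m V)
  note sub = less.prems(2) and hyp = less.prems(3)
  have dle: "vec.dim (V j) \<le> k - 1" if "j \<in> {1..k}" for j
    using hyp[rule_format, of "{j}"] that by simp
  show ?case
  proof (cases "\<forall>j\<in>{1..k}. vec.dim (V j) = k - 1")
    case True
    thus ?thesis using sub hyp by blast
  next
    case False
    then obtain i where i: "i \<in> {1..k}" "vec.dim (V i) + 2 \<le> k"
      using dle by (metis Suc_1 add_Suc_right diff_diff_left le_neq_implies_less less_diff_conv Suc_leI plus_1_eq_Suc)
    define U where "U \<Omega> = (\<Inter>j\<in>\<Omega> - {i}. V j)" for \<Omega>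
    have Usub: "vec.subspace (U \<Omega>)" if "\<Omega> \<subseteq> {1..k}" for \<Omega>
      unfolding U_def using that sub by (intro vec.subspace_Inter) auto
    have finO: "finite \<Omega>" if "\<Omega> \<subseteq> {1..k}" for \<Omega>
      using that finite_subset by blast
    have cardO: "card \<Omega> \<le> k" if "\<Omega> \<subseteq> {1..k}" for \<Omega>
      using card_mono[OF _ that] by simp
    have Udim: "int (vec.dim (U \<Omega>)) + int (card \<Omega>) \<le> int k + 1"
      if "\<Omega> \<subseteq> {1..k}" "i \<in> \<Omega>" "\<Omega> \<noteq> {i}" for \<Omega>
    proof -
      have "\<Omega> - {i} \<noteq> {}" using that by blast
      moreover have "\<Omega> - {i} \<subseteq> {1..k}" using that by blast
      ultimately have "vec.dim (U \<Omega>) \<le> k - card (\<Omega> - {i})"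
        unfolding U_def using hyp by blast
      moreover have "card (\<Omega> - {i}) + 1 = card \<Omega>"
        using that finO[OF that(1)] by (metis One_nat_def Suc_eq_plus1 card.remove)
      moreover note cardO[OF that(1)]
      ultimately show ?thesis by linarith
    qed
    have split: "(\<Inter>j\<in>\<Omega>. X j) = X i \<inter> U \<Omega>" if "i \<in> \<Omega>" "\<forall>j. j \<noteq> i \<longrightarrow> X j = V j" for \<Omega> X
      unfolding U_def using that by auto (metis Diff_iff singletonD)
    define T where "T \<Omega> \<longleftrightarrow> \<Omega> \<subseteq> {1..k} \<and> i \<in> \<Omega> \<and> \<Omega> \<noteq> {i} \<and>
        int (vec.dim (V i \<inter> U \<Omega>)) \<ge> int k - int (card \<Omega>)" for \<Omega>
    have subi: "vec.subspace (V i)" using sub i by blast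
    have "\<exists>W. vec.subspace W \<and> V i \<subseteq> W \<and> vec.dim W \<le> vec.dim (V i) + 1 \<and>
              (\<forall>\<Omega>. T \<Omega> \<longrightarrow> ssum (V i) (U \<Omega>) \<subseteq> W)"
    proof (cases "\<exists>\<Omega>0. T \<Omega>0 \<and> \<not> U \<Omega>0 \<subseteq> V i")
      case True
      then obtain \<Omega>0 where O0: "T \<Omega>0" "\<not> U \<Omega>0 \<subseteq> V i" by blast
      have O0s: "\<Omega>0 \<subseteq> {1..k}" using O0 T_def by blast
      have "vec.dim (ssum (V i) (U \<Omega>0)) \<le> vec.dim (V i) + 1"
        apply (rule dimD[OF subi Usub[OF O0s], of "int k - int (card \<Omega>0)"])
        using Udim[of \<Omega>0] O0(1) unfolding T_def by auto
      moreover have "ssum (V i) (U \<Omega>) \<subseteq> ssum (V i) (U \<Omega>0)" if TO: "T \<Omega>" for \<Omega>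
      proof (cases "U \<Omega> \<subseteq> V i")
        case True
        have "ssum (V i) (U \<Omega>) \<subseteq> V i" using True subi by (intro ssum_le) auto
        thus ?thesis using ssum_left[OF Usub[OF O0s]] by blast
      next
        case False
        have Os: "\<Omega> \<subseteq> {1..k}" "i \<in> \<Omega>" "\<Omega> \<noteq> {i}" using TO T_def by auto
        have O0s': "i \<in> \<Omega>0" "\<Omega>0 \<noteq> {i}" using O0 T_def by auto
        have Us: "\<Omega> \<union> \<Omega>0 \<subseteq> {1..k}" using Os O0s by blast
        have "U \<Omega> \<inter> U \<Omega>0 = U (\<Omega> \<union> \<Omega>0)" unfolding U_def by auto
        hence I3: "V i \<inter> (U \<Omega> \<inter> U \<Omega>0) = (\<Inter>j\<in>\<Omega> \<union> \<Omega>0. V j)"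
          using split[of "\<Omega> \<union> \<Omega>0" V] Os by auto
        have c3: "vec.dim (V i \<inter> (U \<Omega> \<inter> U \<Omega>0)) \<le> k - card (\<Omega> \<union> \<Omega>0)"
          unfolding I3 using hyp Us Os by blast
        have card3: "card (\<Omega> \<union> \<Omega>0) \<le> k" using cardO[OF Us] .
        have cu: "card \<Omega> + card \<Omega>0 = card (\<Omega> \<union> \<Omega>0) + card (\<Omega> \<inter> \<Omega>0)"
          using card_Un_Int[OF finO[OF Os(1)] finO[OF O0s]] .
        have dcase: "card (\<Omega> \<inter> \<Omega>0) = 1 \<or>
            int (vec.dim (ssum (U \<Omega>) (U \<Omega>0))) \<le> int k - int (card (\<Omega> \<inter> \<Omega>0)) + 1"
        proof (cases "card (\<Omega> \<inter> \<Omega>0) = 1")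
          case False
          let ?D = "\<Omega> \<inter> \<Omega>0"
          have Ds: "?D \<subseteq> {1..k}" "i \<in> ?D" using Os O0s' by auto
          have "?D \<noteq> {i}" using False by auto
          hence "int (vec.dim (U ?D)) + int (card ?D) \<le> int k + 1" using Udim Ds by blast
          moreover have "vec.dim (ssum (U \<Omega>) (U \<Omega>0)) \<le> vec.dim (U ?D)"
            by (rule vec.dim_subset, rule ssum_le[OF Usub[OF Ds(1)]]) (auto simp: U_def)
          ultimately show ?thesis by linarith
        qed simp
        have "ssum (V i) (U \<Omega>) = ssum (V i) (U \<Omega>0)"
          apply (rule pairC[OF subi Usub[OF Os(1)] Usub[OF O0s], where k = "int k"
                and a = "int (card \<Omega>)" and b = "int (card \<Omega>0)" and c = "int (card (\<Omega> \<union> \<Omega>0))"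
                and d = "int (card (\<Omega> \<inter> \<Omega>0))"])
          using cu i(2) Udim[OF Os] Udim[OF O0s O0s'] TO O0 False c3 card3 dcase
          unfolding T_def by auto
        thus ?thesis by simp
      qed
      ultimately show ?thesis
        using ssum_sub[OF subi Usub[OF O0s]] ssum_left[OF Usub[OF O0s]] by blast
    next
      case False
      have "ssum (V i) (U \<Omega>) \<subseteq> V i" if "T \<Omega>" for \<Omega>
        using False that subi by (intro ssum_le) (auto simp: T_def)
      thus ?thesis using subi by (intro exI[of _ "V i"]) auto
    qed
    then obtain W where W: "vec.subspace W" "V i \<subseteq> W" "vec.dim W \<le> vec.dim (V i) + 1"
      "\<And>\<Omega>. T \<Omega> \<Longrightarrow> ssum (V i) (U \<Omega>) \<subseteq> W" by blast
    have "W \<noteq> UNIV"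
    proof
      assume "W = UNIV"
      hence "vec.dim W = n" using vec_dim_card[where 'a='a and 'n='n] card by simp
      thus False using W(3) i(2) kn by linarith
    qed
    then obtain v where v: "v \<notin> W" by blast
    define V2 where "V2 = V(i := vec.span (insert v (V i)))"
    have viV: "v \<notin> V i" using v W(2) by blast
    have dimV2: "vec.dim (V2 i) = vec.dim (V i) + 1"
      proof -
      have sp: "vec.span (V i) = V i" using subi by (metis vec.span_eq_iff)
      have nv: "v \<notin> vec.span (V i)" by (subst sp) (rule viV)
      show ?thesis unfolding V2_def using nv by (simp add: vec.dim_insert)
    qed
    have sub2: "\<forall>j\<in>{1..k}. vec.subspace (V2 j)" using sub unfolding V2_def by simp
    have VV2: "V j \<subseteq> V2 j" for j
      unfolding V2_def by (auto intro: vec.span_base)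
    have hyp2: "\<forall>\<Omega>. \<Omega> \<subseteq> {1..k} \<longrightarrow> \<Omega> \<noteq> {} \<longrightarrow> vec.dim (\<Inter>j\<in>\<Omega>. V2 j) \<le> k - card \<Omega>"
    proof (intro allI impI)
      fix \<Omega> assume Os: "\<Omega> \<subseteq> {1..k}" "\<Omega> \<noteq> {}"
      show "vec.dim (\<Inter>j\<in>\<Omega>. V2 j) \<le> k - card \<Omega>"
      proof (cases "i \<in> \<Omega>")
        case False
        hence "(\<Inter>j\<in>\<Omega>. V2 j) = (\<Inter>j\<in>\<Omega>. V j)" unfolding V2_def by (intro INF_cong) auto
        thus ?thesis using hyp Os by simp
      next
        case iO: True
        show ?thesis
        proof (cases "\<Omega> = {i}")
          case True thus ?thesis using dimV2 i by simp
        next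
          case False
          have e2: "(\<Inter>j\<in>\<Omega>. V2 j) = vec.span (insert v (V i)) \<inter> U \<Omega>"
            using split[of \<Omega> V2] iO unfolding V2_def by simp
          have e1: "(\<Inter>j\<in>\<Omega>. V j) = V i \<inter> U \<Omega>" using split[of \<Omega> V] iO by simp
          have h1: "vec.dim (V i \<inter> U \<Omega>) \<le> k - card \<Omega>" using hyp Os e1 by metis
          have cO: "card \<Omega> \<le> k" using cardO[OF Os(1)] .
          show ?thesis
          proof (cases "T \<Omega>")
            case True
            hence "v \<notin> ssum (V i) (U \<Omega>)" using W(4) v by blast
            hence "vec.span (insert v (V i)) \<inter> U \<Omega> = V i \<inter> U \<Omega>"
              using eq_ins[OF subi Usub[OF Os(1)]] by blast
            thus ?thesis using e2 h1 by simp
          next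
            case False
            hence "int (vec.dim (V i \<inter> U \<Omega>)) < int k - int (card \<Omega>)"
              unfolding T_def using Os iO \<open>\<Omega> \<noteq> {i}\<close> by auto
            moreover have "vec.dim (vec.span (insert v (V i)) \<inter> U \<Omega>) \<le> vec.dim (V i \<inter> U \<Omega>) + 1"
              using dim_ins[OF subi Usub[OF Os(1)]] .
            ultimately have "vec.dim (vec.span (insert v (V i)) \<inter> U \<Omega>) \<le> k - card \<Omega>"
              using cO by linarith
            thus ?thesis using e2 by simp
          qed
        qed
      qed
    qed
    define m2 where "m2 = (\<Sum>j\<in>{1..k}. k - 1 - vec.dim (V2 j))"
    have "m2 < m"
    proof -
      have "m = (k - 1 - vec.dim (V i)) + (\<Sum>j\<in>{1..k} - {i}. k - 1 - vec.dim (V j))"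
        using less.prems(1) i(1) by (simp add: sum.remove)
      moreover have "m2 = (k - 1 - vec.dim (V2 i)) + (\<Sum>j\<in>{1..k} - {i}. k - 1 - vec.dim (V2 j))"
        unfolding m2_def using i(1) by (simp add: sum.remove)
      moreover have "(\<Sum>j\<in>{1..k} - {i}. k - 1 - vec.dim (V2 j)) = (\<Sum>j\<in>{1..k} - {i}. k - 1 - vec.dim (V j))"
        unfolding V2_def by (intro sum.cong) auto
      ultimately show ?thesis using dimV2 i(2) by linarith
    qed
    then obtain V' where V': "\<forall>j\<in>{1..k}. vec.subspace (V' j) \<and> V2 j \<subseteq> V' j \<and> vec.dim (V' j) = k - 1"
      "\<forall>\<Omega>. \<Omega> \<subseteq> {1..k} \<longrightarrow> \<Omega> \<noteq> {} \<longrightarrow> vec.dim (\<Inter>j\<in>\<Omega>. V' j) \<le> k - card \<Omega>"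
      using less.IH[OF _ m2_def[symmetric] sub2 hyp2] by blast
    show ?thesis
      apply (rule exI[of _ V'])
      using V' VV2 by blast
  qed
qed

theorem mainTheorem11:
  fixes V :: "nat \<Rightarrow> ('a::{field,finite} ^ 'n) set"
    and k n :: nat
  assumes "CARD('n) = n" and "k \<le> n"
    and "\<And>i. i \<in> {1..k} \<Longrightarrow> vec.subspace (V i)"
    and "\<And>\<Omega>. \<Omega> \<subseteq> {1..k} \<Longrightarrow> \<Omega> \<noteq> {} \<Longrightarrow>
           vec.dim (\<Inter>i\<in>\<Omega>. V i) \<le> k - card \<Omega>"
  shows "\<exists>V' :: nat \<Rightarrow> ('a ^ 'n) set.
           (\<forall>i\<in>{1..k}. vec.subspace (V' i) \<and> V i \<subseteq> V' i \<and> vec.dim (V' i) = k - 1) \<and>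
           (\<forall>\<Omega>. \<Omega> \<subseteq> {1..k} \<longrightarrow> \<Omega> \<noteq> {} \<longrightarrow>
              vec.dim (\<Inter>i\<in>\<Omega>. V' i) \<le> k - card \<Omega>)"
  using main_aux[OF assms(1,2) refl, of V] assms(3,4) by blast

end
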